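(* Let $(K,\nu)$ be a valued field with $\nu$ a rank-one discrete valuation normalized so that $\nu(K^* )=\mathbb{Z}$, with valuation ring $R_\nu$ and uniformizer $\pi$. Let $f(x)=x^n+a\in R_\nu[x]$ with $\nu(a)=m\ge1$ and $\gcd(m,n)=1$. Let $\alpha$ be a root of $f$, $L=K(\alpha)$, and $S$ the integral closure of $R_\nu$ in $L$. Let $s,t\in\mathbb{Z}$ satisfy $ms-nt=1$ and put $\theta=\alpha^s/\pi^t$. Then $f(x)$ is irreducible over $K$ and $S=R_\nu[\theta]$ (i.e., $\theta$ generates a power basis of $S$ over $R_\nu$). *)

theory Defs
  imports "HOL-Computational_Algebra.Polynomial"
begin

text \<open>The valuation is only meaningful on nonzero elements (nu 0 = infinity
  by convention; the value stored at 0 is irrelevant).\<close>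
definition discrete_valuation :: "('a::field \<Rightarrow> int) \<Rightarrow> bool" where
  "discrete_valuation \<nu> \<longleftrightarrow>
     (\<forall>x y. x \<noteq> 0 \<longrightarrow> y \<noteq> 0 \<longrightarrow> \<nu> (x * y) = \<nu> x + \<nu> y) \<and>
     (\<forall>x y. x \<noteq> 0 \<longrightarrow> y \<noteq> 0 \<longrightarrow> x + y \<noteq> 0 \<longrightarrow> \<nu> (x + y) \<ge> min (\<nu> x) (\<nu> y)) \<and>
     \<nu> ` (UNIV - {0}) = UNIV"

definition val_ring :: "('a::field \<Rightarrow> int) \<Rightarrow> 'a set" where
  "val_ring \<nu> = {x. x = 0 \<or> \<nu> x \<ge> 0}"

text \<open>A field embedding (ring homomorphism of fields, automatically injective).\<close>
definition field_embedding :: "('a::field \<Rightarrow> 'b::field) \<Rightarrow> bool" where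
  "field_embedding \<phi> \<longleftrightarrow> \<phi> 1 = 1 \<and> (\<forall>x y. \<phi> (x + y) = \<phi> x + \<phi> y) \<and>
                            (\<forall>x y. \<phi> (x * y) = \<phi> x * \<phi> y)"

definition is_subfield :: "'b::field set \<Rightarrow> bool" where
  "is_subfield F \<longleftrightarrow> 0 \<in> F \<and> 1 \<in> F \<and> (\<forall>x\<in>F. \<forall>y\<in>F. x + y \<in> F \<and> x * y \<in> F) \<and>
     (\<forall>x\<in>F. - x \<in> F) \<and> (\<forall>x\<in>F. x \<noteq> 0 \<longrightarrow> inverse x \<in> F)"

definition gen_subfield :: "'b::field set \<Rightarrow> 'b set" where
  "gen_subfield A = \<Inter> {F. is_subfield F \<and> A \<subseteq> F}"

definition integral_closure :: "'b::field set \<Rightarrow> 'b set \<Rightarrow> 'b set" where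
  "integral_closure R L =
     {x \<in> L. \<exists>p. lead_coeff p = 1 \<and> (\<forall>i. coeff p i \<in> R) \<and> poly p x = 0}"

definition ring_adjoin :: "'b::field set \<Rightarrow> 'b \<Rightarrow> 'b set" where
  "ring_adjoin R \<theta> = {poly p \<theta> | p. \<forall>i. coeff p i \<in> R}"

end

theory Submission
  imports Defs "Jordan_Normal_Form.Char_Poly"
begin


locale dval = fixes \<nu> :: "'a::field \<Rightarrow> int" assumes dv: "discrete_valuation \<nu>"
begin

lemma nu_mult: "x \<noteq> 0 \<Longrightarrow> y \<noteq> 0 \<Longrightarrow> \<nu> (x*y) = \<nu> x + \<nu> y"
  using dv unfolding discrete_valuation_def by blast

lemma nu_add: "x \<noteq> 0 \<Longrightarrow> y \<noteq> 0 \<Longrightarrow> x + y \<noteq> 0 \<Longrightarrow> \<nu> (x+y) \<ge> min (\<nu> x) (\<nu> y)"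
  using dv unfolding discrete_valuation_def by blast

lemma nu_1: "\<nu> 1 = 0"
  using nu_mult[of 1 1] by simp

lemma nu_m1: "\<nu> (-1) = 0"
  using nu_mult[of "-1" "-1"] nu_1 by simp

lemma nu_minus: "x \<noteq> 0 \<Longrightarrow> \<nu> (-x) = \<nu> x"
  using nu_mult[of "-1" x] nu_m1 by simp

lemma nu_inverse: "x \<noteq> 0 \<Longrightarrow> \<nu> (inverse x) = - \<nu> x"
  using nu_mult[of x "inverse x"] nu_1 by simp

lemma nu_power: "x \<noteq> 0 \<Longrightarrow> \<nu> (x ^ k) = int k * \<nu> x"
  by (induction k) (auto simp: nu_1 nu_mult algebra_simps)

lemma nu_powi: "x \<noteq> 0 \<Longrightarrow> \<nu> (x powi k) = k * \<nu> x"
  by (auto simp: power_int_def nu_power nu_inverse)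

lemma nu_divide: "x \<noteq> 0 \<Longrightarrow> y \<noteq> 0 \<Longrightarrow> \<nu> (x / y) = \<nu> x - \<nu> y"
  by (simp add: divide_inverse nu_mult nu_inverse)

definition G :: "int \<Rightarrow> 'a \<Rightarrow> int \<Rightarrow> bool" where
  "G N x e \<longleftrightarrow> x = 0 \<or> N * \<nu> x \<ge> e"
definition S :: "int \<Rightarrow> 'a \<Rightarrow> int \<Rightarrow> bool" where
  "S N x e \<longleftrightarrow> x = 0 \<or> N * \<nu> x > e"

lemma G_0[simp]: "G N 0 e" by (simp add: G_def)
lemma S_0[simp]: "S N 0 e" by (simp add: S_def)
lemma S_G: "S N x e \<Longrightarrow> G N x e" by (auto simp: G_def S_def)
lemma G_S: "G N x e \<Longrightarrow> e' < e \<Longrightarrow> S N x e'" by (auto simp: G_def S_def)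
lemma G_mono: "G N x e \<Longrightarrow> e' \<le> e \<Longrightarrow> G N x e'" by (auto simp: G_def)
lemma G_neg: "G N x e \<Longrightarrow> G N (-x) e" by (cases "x = 0") (auto simp: G_def nu_minus)
lemma S_neg: "S N x e \<Longrightarrow> S N (-x) e" by (cases "x = 0") (auto simp: S_def nu_minus)

lemma G_add: assumes "N > 0" "G N x e" "G N y e" shows "G N (x+y) e"
proof (cases "x = 0 \<or> y = 0 \<or> x + y = 0")
  case True then show ?thesis using assms by (auto simp: G_def)
next
  case False
  then have "\<nu> (x+y) \<ge> min (\<nu> x) (\<nu> y)" using nu_add by blast
  then have "N * \<nu> (x+y) \<ge> N * min (\<nu> x) (\<nu> y)" using assms(1) by simp
  moreover have "N * min (\<nu> x) (\<nu> y) \<ge> e" using assms False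
    by (auto simp: G_def min_def)
  ultimately show ?thesis by (auto simp: G_def)
qed

lemma S_add: assumes "N > 0" "S N x e" "S N y e" shows "S N (x+y) e"
proof (cases "x = 0 \<or> y = 0 \<or> x + y = 0")
  case True then show ?thesis using assms by (auto simp: S_def)
next
  case False
  then have "\<nu> (x+y) \<ge> min (\<nu> x) (\<nu> y)" using nu_add by blast
  then have "N * \<nu> (x+y) \<ge> N * min (\<nu> x) (\<nu> y)" using assms(1) by simp
  moreover have "N * min (\<nu> x) (\<nu> y) > e" using assms False
    by (auto simp: S_def min_def)
  ultimately show ?thesis by (auto simp: S_def)
qed

lemma G_sum: assumes "N > 0" "\<And>i. i \<in> A \<Longrightarrow> G N (f i) e" shows "G N (sum f A) e"
  using assms(2)
proof (induction A rule: infinite_finite_induct)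
  case (insert x F) then show ?case using G_add[OF assms(1)] by auto
qed auto

lemma S_sum: assumes "N > 0" "\<And>i. i \<in> A \<Longrightarrow> S N (f i) e" shows "S N (sum f A) e"
  using assms(2)
proof (induction A rule: infinite_finite_induct)
  case (insert x F) then show ?case using S_add[OF assms(1)] by auto
qed auto

lemma G_mult: "G N x e1 \<Longrightarrow> G N y e2 \<Longrightarrow> G N (x*y) (e1+e2)"
  by (cases "x = 0 \<or> y = 0") (auto simp: G_def nu_mult distrib_left)
lemma S_mult1: "S N x e1 \<Longrightarrow> G N y e2 \<Longrightarrow> S N (x*y) (e1+e2)"
  by (cases "x = 0 \<or> y = 0") (auto simp: G_def S_def nu_mult distrib_left)
lemma S_mult2: "G N x e1 \<Longrightarrow> S N y e2 \<Longrightarrow> S N (x*y) (e1+e2)"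
  by (cases "x = 0 \<or> y = 0") (auto simp: G_def S_def nu_mult distrib_left)

lemma dom: assumes "N > 0" "x \<noteq> 0" "N * \<nu> x = e" "S N r e"
  shows "x + r \<noteq> 0 \<and> N * \<nu> (x + r) = e"
proof (cases "r = 0")
  case True then show ?thesis using assms by auto
next
  case False
  then have lt: "\<nu> x < \<nu> r" using assms by (auto simp: S_def)
  have nz: "x + r \<noteq> 0"
  proof
    assume "x + r = 0" then have "r = -x" by (simp add: add_eq_0_iff)
    then show False using lt nu_minus[OF assms(2)] by simp
  qed
  have ge: "\<nu> (x + r) \<ge> \<nu> x" using nu_add[OF assms(2) False nz] lt by simp
  have "\<nu> (x + r) = \<nu> x"
  proof (rule ccontr)
    assume "\<nu> (x + r) \<noteq> \<nu> x"
    with ge have gt: "\<nu> (x+r) > \<nu> x" by simp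
    have "\<nu> ((x + r) + (-r)) \<ge> min (\<nu> (x+r)) (\<nu> (-r))"
      using nu_add[OF nz, of "-r"] False assms(2) by simp
    then have "\<nu> x \<ge> min (\<nu> (x+r)) (\<nu> (-r))" by simp
    then show False using gt lt nu_minus[OF False] by simp
  qed
  then show ?thesis using nz assms by simp
qed

definition np :: "int \<Rightarrow> int \<Rightarrow> 'a poly \<Rightarrow> int \<Rightarrow> nat \<Rightarrow> nat \<Rightarrow> bool" where
  "np N B p c l h \<longleftrightarrow> l \<le> h \<and> coeff p l \<noteq> 0 \<and> coeff p h \<noteq> 0 \<and>
     N * \<nu> (coeff p l) + B * int l = c \<and> N * \<nu> (coeff p h) + B * int h = c \<and>
     (\<forall>i. G N (coeff p i) (c - B * int i)) \<and>
     (\<forall>i<l. S N (coeff p i) (c - B * int i)) \<and>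
     (\<forall>i>h. S N (coeff p i) (c - B * int i))"

lemma np_unique: assumes p1: "np N B p c l h" and p2: "np N B p c' l' h'"
  shows "c = c' \<and> l = l' \<and> h = h'"
proof -
  have a1: "coeff p l \<noteq> 0" "coeff p h \<noteq> 0" "N * \<nu> (coeff p l) + B * int l = c"
    "N * \<nu> (coeff p h) + B * int h = c"
    and g1: "\<And>i. G N (coeff p i) (c - B * int i)"
    and s1: "\<And>i. i < l \<Longrightarrow> S N (coeff p i) (c - B * int i)"
    and t1: "\<And>i. i > h \<Longrightarrow> S N (coeff p i) (c - B * int i)"
    using p1 unfolding np_def by auto
  have a2: "coeff p l' \<noteq> 0" "coeff p h' \<noteq> 0" "N * \<nu> (coeff p l') + B * int l' = c'"
    "N * \<nu> (coeff p h') + B * int h' = c'"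
    and g2: "\<And>i. G N (coeff p i) (c' - B * int i)"
    and s2: "\<And>i. i < l' \<Longrightarrow> S N (coeff p i) (c' - B * int i)"
    and t2: "\<And>i. i > h' \<Longrightarrow> S N (coeff p i) (c' - B * int i)"
    using p2 unfolding np_def by auto
  have "N * \<nu> (coeff p l') \<ge> c - B * int l'" using g1[of l'] a2(1) unfolding G_def by simp
  moreover have "N * \<nu> (coeff p l) \<ge> c' - B * int l" using g2[of l] a1(1) unfolding G_def by simp
  ultimately have cc: "c = c'" using a1(3) a2(3) by linarith
  have "\<not> l < l'"
  proof
    assume "l < l'" then have "N * \<nu> (coeff p l) > c' - B * int l" using s2[of l] a1(1) unfolding S_def by simp
    then show False using a1(3) cc by linarith
  qed
  moreover have "\<not> l' < l"
  proof
    assume "l' < l" then have "N * \<nu> (coeff p l') > c - B * int l'" using s1[of l'] a2(1) unfolding S_def by simp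
    then show False using a2(3) cc by linarith
  qed
  moreover have "\<not> h < h'"
  proof
    assume "h < h'" then have "N * \<nu> (coeff p h') > c - B * int h'" using t1[of h'] a2(2) unfolding S_def by simp
    then show False using a2(4) cc by linarith
  qed
  moreover have "\<not> h' < h"
  proof
    assume "h' < h" then have "N * \<nu> (coeff p h) > c' - B * int h" using t2[of h] a1(2) unfolding S_def by simp
    then show False using a1(4) cc by linarith
  qed
  ultimately show ?thesis using cc by simp
qed

lemma np_exists: assumes "p \<noteq> 0" shows "\<exists>c l h. np N B p c l h"
proof -
  define w where "w i = N * \<nu> (coeff p i) + B * int i" for i
  define I where "I = {i. coeff p i \<noteq> 0}"
  have fI: "finite I" unfolding I_def
    by (rule finite_subset[of _ "{..degree p}"]) (auto intro: le_degree)
  have neI: "I \<noteq> {}" using assms unfolding I_def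
    by (metis (mono_tags) empty_Collect_eq leading_coeff_0_iff)
  define c where "c = Min (w ` I)"
  have cle: "i \<in> I \<Longrightarrow> c \<le> w i" for i unfolding c_def using fI by auto
  have cin: "c \<in> w ` I" unfolding c_def using fI neI by auto
  define J where "J = {i \<in> I. w i = c}"
  have fJ: "finite J" using fI unfolding J_def by auto
  have neJ: "J \<noteq> {}" using cin unfolding J_def by auto
  define l where "l = Min J"
  define h where "h = Max J"
  have lJ: "l \<in> J" unfolding l_def using fJ neJ by auto
  have hJ: "h \<in> J" unfolding h_def using fJ neJ by auto
  have lh: "l \<le> h" unfolding l_def h_def using fJ neJ by auto
  have gen: "G N (coeff p i) (c - B * int i)" for i
  proof (cases "coeff p i = 0")
    case False then have "i \<in> I" by (simp add: I_def)
    then have "c \<le> w i" by (rule cle)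
    then show ?thesis by (simp add: G_def w_def)
  qed (simp add: G_def)
  have lo: "S N (coeff p i) (c - B * int i)" if "i < l" for i
  proof -
    have "i \<notin> J" using that fJ unfolding l_def by (meson Min_le not_le)
    then show ?thesis using cle[of i] unfolding S_def J_def I_def w_def by force
  qed
  have hi: "S N (coeff p i) (c - B * int i)" if "i > h" for i
  proof -
    have "i \<notin> J" using that fJ unfolding h_def by (meson Max_ge not_le)
    then show ?thesis using cle[of i] unfolding S_def J_def I_def w_def by force
  qed
  have "np N B p c l h"
    unfolding np_def using lJ hJ lh gen lo hi unfolding J_def I_def w_def by auto
  then show ?thesis by blast
qed

lemma term_G: assumes "i \<le> k" "G N a (c1 - B * int i)" "G N b (c2 - B * int (k - i))"
  shows "G N (a * b) (c1 + c2 - B * int k)"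
proof -
  have "c1 - B * int i + (c2 - B * int (k - i)) = c1 + c2 - B * int k"
    using assms(1) by (simp add: of_nat_diff algebra_simps)
  note eq = this
  have gm: "G N (a*b) (c1 - B * int i + (c2 - B * int (k - i)))" by (rule G_mult[OF assms(2,3)])
  from gm show ?thesis by (simp only: eq)
qed

lemma term_S: assumes "i \<le> k" "G N a (c1 - B * int i)" "G N b (c2 - B * int (k - i))"
  "S N a (c1 - B * int i) \<or> S N b (c2 - B * int (k - i))"
  shows "S N (a * b) (c1 + c2 - B * int k)"
proof -
  have "c1 - B * int i + (c2 - B * int (k - i)) = c1 + c2 - B * int k"
    using assms(1) by (simp add: of_nat_diff algebra_simps)
  then show ?thesis using S_mult1[of N a _ b] S_mult2[of N a _ b] assms by metis
qed

lemma np_mult: assumes N: "N > 0" and p: "np N B p c1 l1 h1" and q: "np N B q c2 l2 h2"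
  shows "np N B (p * q) (c1 + c2) (l1 + l2) (h1 + h2)"
proof -
  have Gp: "\<And>i. G N (coeff p i) (c1 - B * int i)" using p unfolding np_def by blast
  have Gq: "\<And>i. G N (coeff q i) (c2 - B * int i)" using q unfolding np_def by blast
  have gen: "G N (coeff (p*q) k) (c1 + c2 - B * int k)" for k
    unfolding coeff_mult by (rule G_sum[OF N]) (auto intro: term_G Gp Gq)
  have strict: "S N (coeff (p*q) k) (c1 + c2 - B * int k)"
    if "\<And>i. i \<le> k \<Longrightarrow> S N (coeff p i) (c1 - B * int i) \<or> S N (coeff q (k-i)) (c2 - B * int (k-i))" for k
    unfolding coeff_mult
  proof (rule S_sum[OF N])
    fix i assume "i \<in> {..k}"
    then show "S N (coeff p i * coeff q (k - i)) (c1 + c2 - B * int k)"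
      using that[of i] by (intro term_S[OF _ Gp Gq]) auto
  qed
  have tight: "coeff (p*q) k \<noteq> 0 \<and> N * \<nu> (coeff (p*q) k) + B * int k = c1 + c2"
    if i0k: "i0 \<le> k" and nzp: "coeff p i0 \<noteq> 0" and nzq: "coeff q (k - i0) \<noteq> 0"
      and ep: "N * \<nu> (coeff p i0) + B * int i0 = c1"
      and eq: "N * \<nu> (coeff q (k-i0)) + B * int (k - i0) = c2"
      and oth: "\<And>i. i \<le> k \<Longrightarrow> i \<noteq> i0 \<Longrightarrow> S N (coeff p i) (c1 - B * int i) \<or> S N (coeff q (k-i)) (c2 - B * int (k-i))"
    for k i0
  proof -
    have sum: "coeff (p*q) k = coeff p i0 * coeff q (k - i0) + (\<Sum>i\<in>{..k} - {i0}. coeff p i * coeff q (k - i))"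
      unfolding coeff_mult using i0k by (simp add: sum.remove)
    have rest: "S N (\<Sum>i\<in>{..k} - {i0}. coeff p i * coeff q (k - i)) (c1 + c2 - B * int k)"
    proof (rule S_sum[OF N])
      fix i assume "i \<in> {..k} - {i0}"
      then show "S N (coeff p i * coeff q (k - i)) (c1 + c2 - B * int k)"
        using oth[of i] by (intro term_S[OF _ Gp Gq]) auto
    qed
    have "N * \<nu> (coeff p i0 * coeff q (k - i0)) = c1 + c2 - B * int k"
      using ep eq nzp nzq i0k by (simp add: nu_mult distrib_left of_nat_diff algebra_simps)
    from dom[OF N _ this rest] nzp nzq show ?thesis unfolding sum by simp
  qed
  have Slp: "\<And>i. i < l1 \<Longrightarrow> S N (coeff p i) (c1 - B * int i)"
    and Shp: "\<And>i. i > h1 \<Longrightarrow> S N (coeff p i) (c1 - B * int i)"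
    and Slq: "\<And>i. i < l2 \<Longrightarrow> S N (coeff q i) (c2 - B * int i)"
    and Shq: "\<And>i. i > h2 \<Longrightarrow> S N (coeff q i) (c2 - B * int i)"
    using p q unfolding np_def by auto
  have lt: "coeff (p*q) (l1+l2) \<noteq> 0 \<and> N * \<nu> (coeff (p*q) (l1+l2)) + B * int (l1+l2) = c1 + c2"
  proof (rule tight[of l1])
    fix i assume a: "i \<le> l1 + l2" "i \<noteq> l1"
    show "S N (coeff p i) (c1 - B * int i) \<or> S N (coeff q (l1 + l2 - i)) (c2 - B * int (l1 + l2 - i))"
    proof (cases "i < l1")
      case True then show ?thesis using Slp by blast
    next
      case False then have "l1 + l2 - i < l2" using a by simp
      then show ?thesis using Slq by blast
    qed
  qed (use p q in \<open>auto simp: np_def\<close>)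
  have ht: "coeff (p*q) (h1+h2) \<noteq> 0 \<and> N * \<nu> (coeff (p*q) (h1+h2)) + B * int (h1+h2) = c1 + c2"
  proof (rule tight[of h1])
    fix i assume a: "i \<le> h1 + h2" "i \<noteq> h1"
    show "S N (coeff p i) (c1 - B * int i) \<or> S N (coeff q (h1 + h2 - i)) (c2 - B * int (h1 + h2 - i))"
    proof (cases "i > h1")
      case True then show ?thesis using Shp by blast
    next
      case False then have "h1 + h2 - i > h2" using a by simp
      then show ?thesis using Shq by blast
    qed
  qed (use p q in \<open>auto simp: np_def\<close>)
  have lo: "S N (coeff (p*q) k) (c1 + c2 - B * int k)" if k: "k < l1 + l2" for k
  proof (rule strict)
    fix i assume a: "i \<le> k"
    show "S N (coeff p i) (c1 - B * int i) \<or> S N (coeff q (k-i)) (c2 - B * int (k-i))"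
    proof (cases "i < l1")
      case True then show ?thesis using Slp by blast
    next
      case False then have "k - i < l2" using a k by simp
      then show ?thesis using Slq by blast
    qed
  qed
  have hi: "S N (coeff (p*q) k) (c1 + c2 - B * int k)" if k: "k > h1 + h2" for k
  proof (rule strict)
    fix i assume a: "i \<le> k"
    show "S N (coeff p i) (c1 - B * int i) \<or> S N (coeff q (k-i)) (c2 - B * int (k-i))"
    proof (cases "i > h1")
      case True then show ?thesis using Shp by blast
    next
      case False then have "k - i > h2" using a k by simp
      then show ?thesis using Shq by blast
    qed
  qed
  have "l1 + l2 \<le> h1 + h2" using p q unfolding np_def by simp
  then show ?thesis unfolding np_def by (simp add: lt ht gen lo hi del: of_nat_add)
qed

lemma np_add_S: assumes N: "N > 0" and p: "np N B p c l h"
  and q: "\<And>i. S N (coeff q i) (c - B * int i)"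
  shows "np N B (p + q) c l h"
proof -
  have tight: "coeff (p+q) i \<noteq> 0 \<and> N * \<nu> (coeff (p+q) i) + B * int i = c"
    if "coeff p i \<noteq> 0" "N * \<nu> (coeff p i) + B * int i = c" for i
    using dom[OF N that(1) _ q[of i]] that(2) by auto
  have pl: "l \<le> h" "coeff p l \<noteq> 0" "coeff p h \<noteq> 0"
    "N * \<nu> (coeff p l) + B * int l = c" "N * \<nu> (coeff p h) + B * int h = c"
    and Gp: "\<And>i. G N (coeff p i) (c - B * int i)"
    and Sl: "\<And>i. i < l \<Longrightarrow> S N (coeff p i) (c - B * int i)"
    and Sh: "\<And>i. i > h \<Longrightarrow> S N (coeff p i) (c - B * int i)"
    using p unfolding np_def by auto
  have "\<forall>i. G N (coeff (p+q) i) (c - B * int i)"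
    using G_add[OF N Gp S_G[OF q]] by simp
  moreover have "\<forall>i<l. S N (coeff (p+q) i) (c - B * int i)"
    using S_add[OF N Sl q] by simp
  moreover have "\<forall>i>h. S N (coeff (p+q) i) (c - B * int i)"
    using S_add[OF N Sh q] by simp
  ultimately show ?thesis unfolding np_def using pl tight[of l] tight[of h] by simp
qed

lemma G_eq: "G N x e \<Longrightarrow> e = e' \<Longrightarrow> G N x e'" by simp
lemma S_eq: "S N x e \<Longrightarrow> e = e' \<Longrightarrow> S N x e'" by simp

lemma np_smult: assumes a0: "a \<noteq> 0" and p: "np N B p c l h"
  shows "np N B (Polynomial.smult a p) (c + N * \<nu> a) l h"
proof -
  have a1: "l \<le> h" "coeff p l \<noteq> 0" "coeff p h \<noteq> 0" "N * \<nu> (coeff p l) + B * int l = c"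
    "N * \<nu> (coeff p h) + B * int h = c"
    and g1: "\<And>i. G N (coeff p i) (c - B * int i)"
    and s1: "\<And>i. i < l \<Longrightarrow> S N (coeff p i) (c - B * int i)"
    and t1: "\<And>i. i > h \<Longrightarrow> S N (coeff p i) (c - B * int i)"
    using p unfolding np_def by auto
  have G1: "G N a (N * \<nu> a)" by (simp add: G_def)
  have e: "N * \<nu> a + (c - B * int i) = c + N * \<nu> a - B * int i" for i by simp
  have g: "G N (a * coeff p i) (c + N * \<nu> a - B * int i)" for i
    by (rule G_eq[OF G_mult[OF G1 g1] e])
  have s: "S N (a * coeff p i) (c + N * \<nu> a - B * int i)" if "i < l" for i
    by (rule S_eq[OF S_mult2[OF G1 s1[OF that]] e])
  have t: "S N (a * coeff p i) (c + N * \<nu> a - B * int i)" if "i > h" for i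
    by (rule S_eq[OF S_mult2[OF G1 t1[OF that]] e])
  have tl: "N * \<nu> (a * coeff p l) + B * int l = c + N * \<nu> a"
    using a1(2,4) a0 by (simp add: nu_mult distrib_left)
  have th: "N * \<nu> (a * coeff p h) + B * int h = c + N * \<nu> a"
    using a1(3,5) a0 by (simp add: nu_mult distrib_left)
  show ?thesis unfolding np_def coeff_smult
    using a1(1-3) a0 g s t tl th by simp
qed

lemma np_one: "np N B 1 0 0 0"
  unfolding np_def by (auto simp: nu_1 G_def S_def coeff_1)

lemma np_power: assumes N: "N > 0" and p: "np N B p c l h"
  shows "np N B (p ^ k) (int k * c) (k * l) (k * h)"
proof (induction k)
  case 0 then show ?case using np_one by simp
next
  case (Suc k)
  have "np N B (p * p ^ k) (c + int k * c) (l + k * l) (h + k * h)"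
    by (rule np_mult[OF N p Suc])
  then show ?case by (simp add: algebra_simps)
qed

lemma np_binom: assumes "n \<ge> 1" "c \<noteq> 0" "\<nu> c = int m"
  shows "np (int n) (int m) (monom 1 n + [:c:]) (int n * int m) 0 n"
proof -
  have cf: "coeff (monom 1 n + [:c:]) i = (if i = n then 1 else 0) + (if i = 0 then c else 0)" for i
    by (simp add: coeff_monom coeff_const)
  have "(0::nat) \<noteq> n" using assms(1) by simp
  then show ?thesis unfolding np_def cf using assms
    by (auto simp: G_def S_def nu_1 algebra_simps)
qed

lemma irred_binom: assumes n: "n \<ge> 1" and c: "c \<noteq> 0" and vc: "\<nu> c = int m"
  and cop: "gcd m n = 1"
  shows "irreducible (monom 1 n + [:c:])"
proof -
  define f where "f = monom 1 n + [:c:]"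
  have npf: "np (int n) (int m) f (int n * int m) 0 n"
    unfolding f_def by (rule np_binom[OF assms(1-3)])
  have f0: "f \<noteq> 0" using npf unfolding np_def by auto
  have degf: "degree f = n"
    unfolding f_def using n by (simp add: degree_add_eq_left degree_monom_eq)
  show ?thesis unfolding f_def[symmetric]
  proof (rule irreducibleI)
    show "f \<noteq> 0" by fact
    show "\<not> is_unit f" using f0 degf n is_unit_iff_degree by auto
  next
    fix g h assume fgh: "f = g * h"
    show "is_unit g \<or> is_unit h"
    proof (rule ccontr)
      assume "\<not> (is_unit g \<or> is_unit h)"
      moreover have g0: "g \<noteq> 0" and h0: "h \<noteq> 0" using f0 fgh by auto
      ultimately have dg: "degree g \<ge> 1" and dh: "degree h \<ge> 1"
        using is_unit_iff_degree by auto
      have dsum: "degree g + degree h = n" using fgh degf g0 h0 by (simp add: degree_mult_eq)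
      obtain c1 l1 h1 where g: "np (int n) (int m) g c1 l1 h1" using np_exists[OF g0] by blast
      obtain c2 l2 h2 where h: "np (int n) (int m) h c2 l2 h2" using np_exists[OF h0] by blast
      have N: "int n > 0" using n by simp
      have "np (int n) (int m) f (c1+c2) (l1+l2) (h1+h2)"
        using np_mult[OF N g h] fgh by simp
      from np_unique[OF npf this] have e: "l1 + l2 = 0" "h1 + h2 = n" by auto
      have "h1 \<le> degree g" "h2 \<le> degree h" using g h unfolding np_def by (auto intro: le_degree)
      then have hd: "h1 = degree g" using e dsum by simp
      have "l1 = 0" using e by simp
      then have "int n * \<nu> (coeff g 0) = c1" "int n * \<nu> (coeff g h1) + int m * int h1 = c1"
        using g unfolding np_def by auto
      then have "int n dvd int m * int h1"
        by (metis add_diff_cancel_left' dvd_diff dvd_triv_left)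
      then have "n dvd m * h1" by (metis of_nat_dvd_iff of_nat_mult)
      then have "n dvd h1" using cop
        by (metis coprime_dvd_mult_right_iff coprime_iff_gcd_eq_1 gcd.commute)
      moreover have "0 < h1" "h1 < n" using hd dg dh dsum by auto
      ultimately show False by (simp add: nat_dvd_not_less)
    qed
  qed
qed

end



lemma gen_subfield_is: "is_subfield (gen_subfield A)"
  unfolding gen_subfield_def is_subfield_def by auto

lemma gen_subfield_sub: "A \<subseteq> gen_subfield A"
  unfolding gen_subfield_def by auto

lemma gen_subfield_least: "is_subfield F \<Longrightarrow> A \<subseteq> F \<Longrightarrow> gen_subfield A \<subseteq> F"
  unfolding gen_subfield_def by auto

lemma subfield_power: "is_subfield F \<Longrightarrow> x \<in> F \<Longrightarrow> x ^ k \<in> F"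
  by (induction k) (auto simp: is_subfield_def)

lemma subfield_inverse: "is_subfield F \<Longrightarrow> x \<in> F \<Longrightarrow> inverse x \<in> F"
  by (cases "x = 0") (auto simp: is_subfield_def)

lemma subfield_powi: "is_subfield F \<Longrightarrow> x \<in> F \<Longrightarrow> x powi k \<in> F"
  by (auto simp: power_int_def intro: subfield_power subfield_inverse)

lemma subfield_div: "is_subfield F \<Longrightarrow> x \<in> F \<Longrightarrow> y \<in> F \<Longrightarrow> x / y \<in> F"
  unfolding divide_inverse using subfield_inverse[of F y] by (auto simp: is_subfield_def)

lemma subfield_poly: assumes F: "is_subfield F" and z: "z \<in> F"
  shows "(\<forall>i. coeff p i \<in> F) \<Longrightarrow> poly p z \<in> F"
proof (induction p)
  case 0 then show ?case using F by (simp add: is_subfield_def)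
next
  case (pCons a p)
  have "a \<in> F" using pCons.prems by (metis coeff_pCons_0)
  moreover have "\<forall>i. coeff p i \<in> F" using pCons.prems by (metis coeff_pCons_Suc)
  then have "poly p z \<in> F" using pCons.IH by blast
  ultimately show ?case using F z by (simp add: is_subfield_def)
qed

lemma sum_closed: assumes "\<And>x y. x \<in> T \<Longrightarrow> y \<in> T \<Longrightarrow> x + y \<in> T" "0 \<in> T"
  "\<And>i. i \<in> A \<Longrightarrow> f i \<in> T" shows "sum f A \<in> T"
  using assms(3)
proof (induction A rule: infinite_finite_induct)
  case (insert x F) then show ?case using assms(1) by auto
qed (use assms(2) in auto)

lemma prod_closed: assumes "\<And>x y. x \<in> T \<Longrightarrow> y \<in> T \<Longrightarrow> x * y \<in> T" "1 \<in> T"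
  "\<And>i. i \<in> A \<Longrightarrow> f i \<in> T" shows "prod f A \<in> T"
  using assms(3)
proof (induction A rule: infinite_finite_induct)
  case (insert x F) then show ?case using assms(1) by auto
qed (use assms(2) in auto)

lemma (in dval) val_ring_props:
  shows "0 \<in> val_ring \<nu>" "1 \<in> val_ring \<nu>"
    "x \<in> val_ring \<nu> \<Longrightarrow> y \<in> val_ring \<nu> \<Longrightarrow> x + y \<in> val_ring \<nu>"
    "x \<in> val_ring \<nu> \<Longrightarrow> y \<in> val_ring \<nu> \<Longrightarrow> x * y \<in> val_ring \<nu>"
    "x \<in> val_ring \<nu> \<Longrightarrow> - x \<in> val_ring \<nu>"
proof -
  show "0 \<in> val_ring \<nu>" "1 \<in> val_ring \<nu>" by (auto simp: val_ring_def nu_1)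
  show "x \<in> val_ring \<nu> \<Longrightarrow> - x \<in> val_ring \<nu>"
    by (cases "x = 0") (auto simp: val_ring_def nu_minus)
  show "x \<in> val_ring \<nu> \<Longrightarrow> y \<in> val_ring \<nu> \<Longrightarrow> x * y \<in> val_ring \<nu>"
    by (cases "x = 0 \<or> y = 0") (auto simp: val_ring_def nu_mult)
  assume x: "x \<in> val_ring \<nu>" and y: "y \<in> val_ring \<nu>"
  show "x + y \<in> val_ring \<nu>"
  proof (cases "x = 0 \<or> y = 0 \<or> x + y = 0")
    case True then show ?thesis using x y by (auto simp: val_ring_def)
  next
    case False
    then have "\<nu> (x + y) \<ge> min (\<nu> x) (\<nu> y)" using nu_add by blast
    then show ?thesis using x y False by (auto simp: val_ring_def)
  qed
qed

lemma irr_bezout: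
  fixes g q :: "'a::field poly"
  assumes irr: "irreducible g" and ndvd: "\<not> g dvd q"
  shows "\<exists>u w. u * g + w * q = 1"
proof -
  define J where "J = {u * g + w * q | u w. True}"
  have gJ: "g \<in> J" unfolding J_def by (rule CollectI, rule exI[of _ 1], rule exI[of _ 0]) simp
  have qJ: "q \<in> J" unfolding J_def by (rule CollectI, rule exI[of _ 0], rule exI[of _ 1]) simp
  have g0: "g \<noteq> 0" using irr by auto
  define k0 where "k0 = (LEAST k. \<exists>d\<in>J. d \<noteq> 0 \<and> degree d = k)"
  have "\<exists>d\<in>J. d \<noteq> 0 \<and> degree d = k0"
    unfolding k0_def by (rule LeastI[of _ "degree g"]) (use gJ g0 in blast)
  then obtain d where dJ: "d \<in> J" and d0: "d \<noteq> 0" and dk: "degree d = k0" by blast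
  have dmin: "degree e \<ge> k0" if "e \<in> J" "e \<noteq> 0" for e
    unfolding k0_def by (rule Least_le) (use that in blast)
  obtain u0 w0 where d_eq: "d = u0 * g + w0 * q" using dJ unfolding J_def by blast
  have dvdJ: "d dvd e" if eJ: "e \<in> J" for e
  proof -
    obtain u w where e_eq: "e = u * g + w * q" using eJ unfolding J_def by blast
    have "e mod d = e - e div d * d" by (simp add: minus_div_mult_eq_mod)
    also have "\<dots> = (u - e div d * u0) * g + (w - e div d * w0) * q"
      unfolding e_eq d_eq by (simp add: algebra_simps)
    finally have "e mod d \<in> J" unfolding J_def by blast
    moreover have "e mod d = 0 \<or> degree (e mod d) < degree d" using degree_mod_less[OF d0] by blast
    ultimately have "e mod d = 0" using dmin dk by fastforce
    then show ?thesis by (simp add: mod_eq_0_iff_dvd)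
  qed
  have dg: "d dvd g" and dq: "d dvd q" using dvdJ gJ qJ by auto
  from dg obtain e where ge: "g = d * e" by (elim dvdE)
  have "is_unit d"
  proof (rule ccontr)
    assume nu: "\<not> is_unit d"
    then have "is_unit e" using irreducibleD[OF irr ge] by blast
    then obtain e' where "1 = e * e'" by (elim dvdE)
    then have "d = g * e'" using ge by (metis mult.assoc mult.right_neutral)
    then have "g dvd d" by simp
    then have "g dvd q" using dq by (rule dvd_trans)
    then show False using ndvd by simp
  qed
  then obtain d' where "1 = d * d'" by (elim dvdE)
  then have "1 = (d' * u0) * g + (d' * w0) * q" unfolding d_eq by (simp add: algebra_simps)
  then show ?thesis by metis
qed

theorem corollary3p3:
  fixes \<nu> :: "'a::field \<Rightarrow> int" and \<pi> a :: 'a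
    and \<phi> :: "'a \<Rightarrow> 'b::field" and \<alpha> :: 'b
    and n m :: nat and s t :: int
  assumes "discrete_valuation \<nu>"
    and "\<pi> \<noteq> 0" and "\<nu> \<pi> = 1"
    and "a \<noteq> 0" and "\<nu> a = int m" and "m \<ge> 1" and "gcd m n = 1"
    and "field_embedding \<phi>"
    and "poly (map_poly \<phi> (monom 1 n + [:a:])) \<alpha> = 0"
    and "int m * s - int n * t = 1"
  shows "irreducible (monom 1 n + [:a:])
       \<and> integral_closure (\<phi> ` val_ring \<nu>) (gen_subfield (\<phi> ` UNIV \<union> {\<alpha>}))
         = ring_adjoin (\<phi> ` val_ring \<nu>) (\<alpha> powi s / \<phi> \<pi> powi t)"
proof -
  interpret dval \<nu> by unfold_locales (rule assms(1))
  have phi1: "\<phi> 1 = 1" and phiadd: "\<And>x y. \<phi> (x+y) = \<phi> x + \<phi> y"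
    and phimult: "\<And>x y. \<phi> (x*y) = \<phi> x * \<phi> y"
    using assms(8) unfolding field_embedding_def by auto
  have "\<phi> 0 + \<phi> 0 = \<phi> 0 + 0" by (metis add.right_neutral phiadd)
  then have phi0: "\<phi> 0 = 0" by (rule add_left_imp_eq)
  interpret fh: field_hom \<phi> by unfold_locales (auto simp: phi1 phiadd phimult phi0)
  interpret mp: map_poly_idom_hom \<phi> by unfold_locales
  have phi_eq0: "\<phi> x = 0 \<longleftrightarrow> x = 0" for x
  proof
    assume h: "\<phi> x = 0"
    show "x = 0"
    proof (rule ccontr)
      assume "x \<noteq> 0"
      then have "\<phi> (x * inverse x) = 1" by (simp add: phi1)
      then show False using h by (simp add: phimult)
    qed
  qed (simp add: phi0)
  have phi_inj: "\<phi> x = \<phi> y \<Longrightarrow> x = y" for x y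
    using phi_eq0[of "x - y"] by (simp add: fh.hom_add fh.hom_mult fh.hom_uminus fh.hom_minus fh.hom_power fh.hom_inverse fh.hom_div)
  have phi_powi: "\<phi> (x powi k) = \<phi> x powi k" for x k
    by (simp add: power_int_def fh.hom_add fh.hom_mult fh.hom_uminus fh.hom_minus fh.hom_power fh.hom_inverse fh.hom_div)
  have mapf: "map_poly \<phi> (monom 1 n + [:a:]) = monom 1 n + [:\<phi> a:]"
    by (simp add: fh.map_poly_hom_add fh.map_poly_pCons_hom phi1)
  have halpha: "\<alpha> ^ n = - \<phi> a"
    using assms(9) unfolding mapf by (simp add: poly_monom eq_neg_iff_add_eq_0)
  have a_nz: "\<phi> a \<noteq> 0" using assms(4) phi_eq0 by simp
  have n1: "n \<ge> 1"
  proof (rule ccontr)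
    assume "\<not> n \<ge> 1" then have "n = 0" by simp
    with halpha have ma: "- \<phi> a = 1" by simp
    have "\<phi> (1 + a) = 1 + \<phi> a" by (simp add: phiadd phi1)
    also have "\<dots> = 0" using ma by (metis add.left_inverse)
    finally have "\<phi> (1 + a) = 0" .
    then have "1 + a = 0" using phi_eq0 by simp
    then have "a = -1" by (simp add: add_eq_0_iff)
    then show False using assms(5,6) nu_m1 by simp
  qed
  have alpha0: "\<alpha> \<noteq> 0" using halpha a_nz n1 by (metis neg_equal_0_iff_equal power_0_left not_one_le_zero)
  have pi0: "\<phi> \<pi> \<noteq> 0" using assms(2) phi_eq0 by simp
  have irr_f: "irreducible (monom 1 n + [:a:])"
    by (rule irred_binom[OF n1 assms(4,5)]) (use assms(7) in simp)
  define b where "b = (-a) powi s / \<pi> powi (t * int n)"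
  have b0: "b \<noteq> 0" using assms(2,4) unfolding b_def by simp
  have nub: "\<nu> b = 1"
  proof -
    have "\<nu> b = s * \<nu> (-a) - (t * int n) * \<nu> \<pi>"
      unfolding b_def using assms(2,4) by (simp add: nu_divide nu_powi)
    also have "\<dots> = int m * s - int n * t" using assms(3,4,5) nu_minus by simp
    finally show ?thesis using assms(10) by simp
  qed
  define \<theta> where "\<theta> = \<alpha> powi s / \<phi> \<pi> powi t"
  have th0: "\<theta> \<noteq> 0" using alpha0 pi0 unfolding \<theta>_def by simp
  have thn: "\<theta> ^ n = \<phi> b"
  proof -
    have "\<theta> ^ n = \<alpha> powi (s * int n) / \<phi> \<pi> powi (t * int n)"
      unfolding \<theta>_def by (simp add: power_divide power_int_power')
    also have "\<alpha> powi (s * int n) = (\<alpha> powi (int n)) powi s"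
      by (metis mult.commute power_int_mult)
    also have "\<dots> = (- \<phi> a) powi s" using halpha by simp
    also have "(- \<phi> a) powi s / \<phi> \<pi> powi (t * int n) = \<phi> b"
      unfolding b_def by (simp add: fh.hom_add fh.hom_mult fh.hom_uminus fh.hom_minus fh.hom_power fh.hom_inverse fh.hom_div phi_powi)
    finally show ?thesis .
  qed
  define cc where "cc = \<pi> powi (t * int m) / (-a) powi t"
  have th_m: "\<theta> ^ m = \<alpha> * (- \<phi> a) powi t / \<phi> \<pi> powi (t * int m)"
  proof -
    have "\<theta> ^ m = \<alpha> powi (s * int m) / \<phi> \<pi> powi (t * int m)"
      unfolding \<theta>_def by (simp add: power_divide power_int_power')
    also have "s * int m = 1 + int n * t" using assms(10) by (simp add: algebra_simps)
    also have "\<alpha> powi (1 + int n * t) = \<alpha> * (\<alpha> powi (int n)) powi t"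
      using alpha0 by (simp add: power_int_add power_int_mult)
    also have "(\<alpha> powi (int n)) = - \<phi> a" using halpha by simp
    finally show ?thesis .
  qed
  have alpha_eq: "\<alpha> = \<phi> cc * \<theta> ^ m"
    unfolding th_m cc_def using pi0 a_nz by (simp add: fh.hom_add fh.hom_mult fh.hom_uminus fh.hom_minus fh.hom_power fh.hom_inverse fh.hom_div phi_powi field_simps)
  define g where "g = monom 1 n + [:-b:]"
  have irr_g: "irreducible g"
    unfolding g_def by (rule irred_binom[OF n1, of "-b" 1]) (use b0 nub nu_minus in auto)
  have np_g: "np (int n) 1 g (int n) 0 n"
    using np_binom[OF n1, of "-b" 1] b0 nub nu_minus unfolding g_def by simp
  have g0: "g \<noteq> 0" using np_g unfolding np_def by auto
  have deg_g: "degree g = n"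
    unfolding g_def using n1 by (simp add: degree_add_eq_left degree_monom_eq)
  have N: "int n > 0" using n1 by simp
  define ev where "ev q = poly (map_poly \<phi> q) \<theta>" for q
  have ev_add: "ev (p + q) = ev p + ev q" for p q unfolding ev_def by (simp add: fh.map_poly_hom_add)
  have ev_mult: "ev (p * q) = ev p * ev q" for p q unfolding ev_def by (simp add: mp.hom_mult)
  have ev_const: "ev [:c:] = \<phi> c" for c unfolding ev_def by (simp add: fh.map_poly_pCons_hom)
  have ev_1: "ev 1 = 1" unfolding ev_def by simp
  have ev_0: "ev 0 = 0" unfolding ev_def by simp
  have ev_minus: "ev (- p) = - ev p" for p unfolding ev_def by (simp add: mp.hom_uminus)
  have ev_smult: "ev (Polynomial.smult c p) = \<phi> c * ev p" for c p
    unfolding ev_def by (simp add: fh.map_poly_hom_smult)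
  have ev_power: "ev (p ^ k) = ev p ^ k" for p k by (induction k) (simp_all add: ev_mult ev_1)
  have ev_sum: "ev (sum f A) = (\<Sum>x\<in>A. ev (f x))" for f and A :: "nat set"
    by (induction A rule: infinite_finite_induct) (simp_all add: ev_add ev_0)
  have ev_monom: "ev (monom c k) = \<phi> c * \<theta> ^ k" for c k unfolding ev_def by (simp add: poly_monom)
  have ev_g: "ev g = 0" unfolding g_def
    by (simp add: ev_add ev_monom ev_const phi1 thn fh.hom_uminus)
  have bez: "\<exists>w. ev w * ev q = 1" if ng: "\<not> g dvd q" for q
  proof -
    obtain u w where "u * g + w * q = 1" using irr_bezout[OF irr_g ng] by blast
    then have "ev (u * g + w * q) = 1" using ev_1 by simp
    then show ?thesis by (auto simp: ev_add ev_mult ev_g)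
  qed
  have key: "g dvd P" if "ev P = 0" for P
    using bez[of P] that by auto
  define V where "V = range ev"
  have subV: "is_subfield V"
    unfolding is_subfield_def V_def
  proof (intro conjI ballI impI)
    show "0 \<in> range ev" using ev_0 by (metis rangeI)
    show "1 \<in> range ev" using ev_1 by (metis rangeI)
    fix x assume "x \<in> range ev"
    then obtain p where xp: "x = ev p" by auto
    show "- x \<in> range ev" unfolding xp ev_minus[symmetric] by simp
    {
      fix y assume "y \<in> range ev"
      then obtain q where yq: "y = ev q" by auto
      show "x + y \<in> range ev" unfolding xp yq ev_add[symmetric] by simp
      show "x * y \<in> range ev" unfolding xp yq ev_mult[symmetric] by simp
    }
    assume "x \<noteq> 0"
    then have "\<not> g dvd p" using xp ev_g by (auto simp: ev_mult elim!: dvdE)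
    then obtain w where "ev w * ev p = 1" using bez by blast
    then have "inverse x = ev w" unfolding xp by (simp add: inverse_unique mult.commute)
    then show "inverse x \<in> range ev" by simp
  qed
  define L where "L = gen_subfield (\<phi> ` UNIV \<union> {\<alpha>})"
  have alphaV: "\<alpha> \<in> V" unfolding V_def alpha_eq ev_monom[symmetric] by simp
  have phiV: "\<phi> c \<in> V" for c unfolding V_def by (metis ev_const rangeI)
  have LV: "L \<subseteq> V" unfolding L_def
    by (rule gen_subfield_least[OF subV]) (use alphaV phiV in auto)
  have subL: "is_subfield L" unfolding L_def by (rule gen_subfield_is)
  have phiL: "\<phi> c \<in> L" for c unfolding L_def using gen_subfield_sub[of "\<phi> ` UNIV \<union> {\<alpha>}"] by auto
  have alphaL: "\<alpha> \<in> L" unfolding L_def using gen_subfield_sub[of "\<phi> ` UNIV \<union> {\<alpha>}"] by auto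
  have thetaL: "\<theta> \<in> L" unfolding \<theta>_def
    by (intro subfield_div[OF subL] subfield_powi[OF subL] alphaL phiL)
  define R' where "R' = \<phi> ` val_ring \<nu>"
  have R'0: "0 \<in> R'" unfolding R'_def using val_ring_props(1) phi0 by (metis image_eqI)
  have R'1: "1 \<in> R'" unfolding R'_def using val_ring_props(2) phi1 by (metis image_eqI)
  have R'add: "x + y \<in> R'" if xyR: "x \<in> R'" "y \<in> R'" for x y
  proof -
    obtain x' y' where xv: "x' \<in> val_ring \<nu>" and yv: "y' \<in> val_ring \<nu>" and "x = \<phi> x'" "y = \<phi> y'"
      using xyR unfolding R'_def by auto
    then show ?thesis unfolding R'_def by (intro rev_image_eqI[OF val_ring_props(3)[OF xv yv]]) (simp add: phiadd)
  qed
  have R'mult: "x * y \<in> R'" if xyR: "x \<in> R'" "y \<in> R'" for x y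
  proof -
    obtain x' y' where xv: "x' \<in> val_ring \<nu>" and yv: "y' \<in> val_ring \<nu>" and "x = \<phi> x'" "y = \<phi> y'"
      using xyR unfolding R'_def by auto
    then show ?thesis unfolding R'_def by (intro rev_image_eqI[OF val_ring_props(4)[OF xv yv]]) (simp add: phimult)
  qed
  have R'neg: "- x \<in> R'" if xyR: "x \<in> R'" for x
  proof -
    obtain x' where xv: "x' \<in> val_ring \<nu>" and "x = \<phi> x'"
      using xyR unfolding R'_def by auto
    then show ?thesis unfolding R'_def by (intro rev_image_eqI[OF val_ring_props(5)[OF xv]]) (simp add: fh.hom_uminus)
  qed
  have bR: "\<phi> b \<in> R'" unfolding R'_def using nub by (auto simp: val_ring_def)
  have R'L: "x \<in> L" if "x \<in> R'" for x using that phiL unfolding R'_def by auto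
  have sub1: "integral_closure R' L \<subseteq> ring_adjoin R' \<theta>"
  proof
    fix x assume "x \<in> integral_closure R' L"
    then have xL: "x \<in> L" and "\<exists>p. lead_coeff p = 1 \<and> (\<forall>i. coeff p i \<in> R') \<and> poly p x = 0"
      unfolding integral_closure_def by auto
    then obtain p where p1: "lead_coeff p = 1" and pR: "\<forall>i. coeff p i \<in> R'" and px: "poly p x = 0"
      by blast
    from xL LV obtain q where xq: "x = ev q" unfolding V_def by auto
    define r where "r = q mod g"
    have xr: "x = ev r"
    proof -
      have "q = q div g * g + r" unfolding r_def by simp
      then have "ev q = ev (q div g) * ev g + ev r" by (metis ev_add ev_mult)
      then show ?thesis using xq ev_g by simp
    qed
    have degr: "r = 0 \<or> degree r < n" using degree_mod_less[OF g0, of q] deg_g unfolding r_def by simp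
    show "x \<in> ring_adjoin R' \<theta>"
    proof (cases "\<forall>i. coeff r i \<in> val_ring \<nu>")
      case True
      show ?thesis unfolding ring_adjoin_def
      proof (intro CollectI exI conjI allI)
        show "x = poly (map_poly \<phi> r) \<theta>" using xr unfolding ev_def .
        fix i show "coeff (map_poly \<phi> r) i \<in> R'" using True unfolding R'_def by simp
      qed
    next
      case False
      then obtain i0 where i0: "coeff r i0 \<notin> val_ring \<nu>" by blast
      then have ci0: "coeff r i0 \<noteq> 0" "\<nu> (coeff r i0) < 0" unfolding val_ring_def by auto
      then have r0: "r \<noteq> 0" by auto
      have degr': "degree r < n" using degr r0 by simp
      have i0n: "i0 < n" using le_degree[OF ci0(1)] degr' by simp
      obtain \<mu> l h where npr: "np (int n) 1 r \<mu> l h" using np_exists[OF r0] by blast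
      have mu_neg: "\<mu> < 0"
      proof -
        have "G (int n) (coeff r i0) (\<mu> - 1 * int i0)" using npr unfolding np_def by blast
        then have "int n * \<nu> (coeff r i0) \<ge> \<mu> - int i0" using ci0 unfolding G_def by simp
        moreover have "int n * \<nu> (coeff r i0) \<le> int n * (-1)"
          using ci0(2) N by (intro mult_left_mono) auto
        ultimately show ?thesis using i0n by simp
      qed
      have lh: "l = h"
      proof -
        have nzl: "coeff r l \<noteq> 0" and nzh: "coeff r h \<noteq> 0" and lleh: "l \<le> h"
          and e1: "int n * \<nu> (coeff r l) + 1 * int l = \<mu>"
          and e2: "int n * \<nu> (coeff r h) + 1 * int h = \<mu>"
          using npr unfolding np_def by auto
        have hn: "h < n" using le_degree[OF nzh] degr' by simp
        have "int h - int l = int n * (\<nu> (coeff r l) - \<nu> (coeff r h))"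
          using e1 e2 by (simp add: algebra_simps)
        then have dv: "int n dvd (int h - int l)" by simp
        show ?thesis
        proof (rule ccontr)
          assume "l \<noteq> h"
          then have "0 < int h - int l" using lleh by simp
          moreover have "int h - int l < int n" using hn by simp
          ultimately show False using zdvd_not_zless dv by blast
        qed
      qed
      define k where "k = degree p"
      have k1: "k \<ge> 1"
      proof (rule ccontr)
        assume "\<not> k \<ge> 1" then have "degree p = 0" unfolding k_def by simp
        then show False using px p1 by (simp add: poly_altdef)
      qed
      define rr where "rr j = (SOME y. y \<in> val_ring \<nu> \<and> \<phi> y = coeff p j)" for j
      have rr: "rr j \<in> val_ring \<nu> \<and> \<phi> (rr j) = coeff p j" for j
      proof -
        have "\<exists>y. y \<in> val_ring \<nu> \<and> \<phi> y = coeff p j" using pR unfolding R'_def by (metis imageE)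
        then show ?thesis unfolding rr_def by (rule someI_ex)
      qed
      have rrk: "rr k = 1"
        using rr[of k] p1 phi1 phi_inj unfolding k_def by metis
      define P where "P = r ^ k + (\<Sum>j<k. Polynomial.smult (rr j) (r ^ j))"
      have evP: "ev P = 0"
      proof -
        have "ev P = x ^ k + (\<Sum>j<k. coeff p j * x ^ j)"
          unfolding P_def using xr by (simp add: ev_add ev_sum ev_smult ev_power rr)
        also have "\<dots> = (\<Sum>j\<le>k. coeff p j * x ^ j)"
          using p1 unfolding k_def by (simp add: lessThan_Suc_atMost[symmetric])
        also have "\<dots> = poly p x" unfolding k_def by (simp add: poly_altdef)
        finally show ?thesis using px by simp
      qed
      have npP: "np (int n) 1 P (int k * \<mu>) (k * l) (k * l)"
        unfolding P_def
      proof (rule np_add_S[OF N])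
        show "np (int n) 1 (r ^ k) (int k * \<mu>) (k * l) (k * l)"
          using np_power[OF N npr, of k] lh by simp
        fix i
        show "S (int n) (coeff (\<Sum>j<k. Polynomial.smult (rr j) (r ^ j)) i) (int k * \<mu> - 1 * int i)"
          unfolding coeff_sum
        proof (rule S_sum[OF N])
          fix j assume "j \<in> {..<k}"
          then have jk: "j < k" by simp
          have Grr: "G (int n) (rr j) 0" using rr[of j] unfolding val_ring_def G_def by auto
          have Gr: "G (int n) (coeff (r ^ j) i) (int j * \<mu> - 1 * int i)"
            using np_power[OF N npr, of j] unfolding np_def by blast
          have G2: "G (int n) (rr j * coeff (r ^ j) i) (0 + (int j * \<mu> - 1 * int i))"
            by (rule G_mult[OF Grr Gr])
          have ineq: "int k * \<mu> - 1 * int i < 0 + (int j * \<mu> - 1 * int i)"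
            using jk mu_neg by (simp add: mult_strict_right_mono_neg)
          have "S (int n) (rr j * coeff (r ^ j) i) (int k * \<mu> - 1 * int i)"
            by (rule G_S[OF G2 ineq])
          then show "S (int n) (coeff (Polynomial.smult (rr j) (r ^ j)) i) (int k * \<mu> - 1 * int i)"
            by simp
        qed
      qed
      have P0: "P \<noteq> 0" using npP unfolding np_def by auto
      obtain Q where PQ: "P = g * Q" using key[OF evP] unfolding dvd_def by blast
      then have Q0: "Q \<noteq> 0" using P0 by auto
      obtain cQ lQ hQ where npQ: "np (int n) 1 Q cQ lQ hQ" using np_exists[OF Q0] by blast
      have "np (int n) 1 P (int n + cQ) (0 + lQ) (n + hQ)" using np_mult[OF N np_g npQ] PQ by simp
      from np_unique[OF npP this] have "k * l = lQ" "k * l = n + hQ" by auto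
      moreover have "lQ \<le> hQ" using npQ unfolding np_def by simp
      ultimately show ?thesis using n1 by simp
    qed
  qed
  have sub2: "ring_adjoin R' \<theta> \<subseteq> integral_closure R' L"
  proof
    fix x assume "x \<in> ring_adjoin R' \<theta>"
    then obtain p where xp: "x = poly p \<theta>" and pR: "\<forall>i. coeff p i \<in> R'"
      unfolding ring_adjoin_def by auto
    have xL: "x \<in> L" unfolding xp
      by (rule subfield_poly[OF subL thetaL]) (use pR R'L in auto)
    define Mod where "Mod = {\<Sum>j<n. cf j * \<theta> ^ j | cf. \<forall>j. cf j \<in> R'}"
    have Mod_intro: "(\<Sum>j<n. cf j * \<theta> ^ j) \<in> Mod" if "\<forall>j. cf j \<in> R'" for cf
      unfolding Mod_def using that by blast
    have Mod_add: "y + z \<in> Mod" if yzM: "y \<in> Mod" "z \<in> Mod" for y z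
    proof -
      obtain c1 where c1: "\<forall>j. c1 j \<in> R'" "y = (\<Sum>j<n. c1 j * \<theta> ^ j)" using yzM(1) unfolding Mod_def by auto
      obtain c2 where c2: "\<forall>j. c2 j \<in> R'" "z = (\<Sum>j<n. c2 j * \<theta> ^ j)" using yzM(2) unfolding Mod_def by auto
      have "y + z = (\<Sum>j<n. (c1 j + c2 j) * \<theta> ^ j)"
        unfolding c1(2) c2(2) by (simp add: sum.distrib distrib_right)
      moreover have "\<forall>j. c1 j + c2 j \<in> R'" using c1 c2 R'add by blast
      ultimately show ?thesis using Mod_intro[of "\<lambda>j. c1 j + c2 j"] by simp
    qed
    have Mod_scal: "c * y \<in> Mod" if cyM: "c \<in> R'" "y \<in> Mod" for c y
    proof -
      obtain c1 where c1: "\<forall>j. c1 j \<in> R'" "y = (\<Sum>j<n. c1 j * \<theta> ^ j)" using cyM(2) unfolding Mod_def by auto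
      have "c * y = (\<Sum>j<n. (c * c1 j) * \<theta> ^ j)"
        unfolding c1(2) by (simp add: sum_distrib_left mult.assoc)
      moreover have "\<forall>j. c * c1 j \<in> R'" using c1 cyM(1) R'mult by blast
      ultimately show ?thesis using Mod_intro[of "\<lambda>j. c * c1 j"] by simp
    qed
    obtain n' where n': "n = Suc n'" using n1 by (cases n) auto
    have Mod_th: "\<theta> * y \<in> Mod" if yM: "y \<in> Mod" for y
    proof -
      obtain c1 where c1: "\<forall>j. c1 j \<in> R'" "y = (\<Sum>j<n. c1 j * \<theta> ^ j)" using yM unfolding Mod_def by auto
      define c2 where "c2 j = (if j = 0 then c1 n' * \<phi> b else c1 (j - 1))" for j
      have "\<theta> * y = (\<Sum>j<n'. c1 j * \<theta> ^ Suc j) + c1 n' * \<theta> ^ n"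
        unfolding c1(2) n' sum_distrib_left sum.lessThan_Suc by (simp add: distrib_left sum_distrib_left mult_ac)
      also have "\<dots> = (\<Sum>j<n. c2 j * \<theta> ^ j)"
        unfolding n' sum.lessThan_Suc_shift c2_def using thn n' by simp
      finally have "\<theta> * y = (\<Sum>j<n. c2 j * \<theta> ^ j)" .
      moreover have "\<forall>j. c2 j \<in> R'" unfolding c2_def using c1 bR R'mult by auto
      ultimately show ?thesis using Mod_intro[of c2] by simp
    qed
    have Mod_1: "1 \<in> Mod"
    proof -
      have "(\<Sum>j<n. (if j = 0 then 1 else 0) * \<theta> ^ j) = 1"
        unfolding n' sum.lessThan_Suc_shift by simp
      moreover have "\<forall>j. (if j = 0 then 1 else 0) \<in> R'" using R'0 R'1 by simp
      ultimately show ?thesis using Mod_intro[of "\<lambda>j. if j = 0 then 1 else 0"] by simp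
    qed
    have Mod_poly: "\<forall>z\<in>Mod. poly q \<theta> * z \<in> Mod" if "\<forall>i. coeff q i \<in> R'" for q
      using that
    proof (induction q)
      case 0 then show ?case using Mod_scal[OF R'0] by simp
    next
      case (pCons c q)
      have c: "c \<in> R'" using pCons.prems by (metis coeff_pCons_0)
      have "\<forall>i. coeff q i \<in> R'" using pCons.prems by (metis coeff_pCons_Suc)
      then have IH: "\<forall>z\<in>Mod. poly q \<theta> * z \<in> Mod" using pCons.IH by blast
      show ?case
      proof
        fix z assume z: "z \<in> Mod"
        have "poly (pCons c q) \<theta> * z = c * z + poly q \<theta> * (\<theta> * z)" by (simp add: algebra_simps)
        then show "poly (pCons c q) \<theta> * z \<in> Mod"
          using Mod_add Mod_scal[OF c z] IH Mod_th[OF z] by simp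
      qed
    qed
    have thpow: "\<theta> ^ i \<in> Mod" for i
      by (induction i) (simp_all add: Mod_1 Mod_th)
    have xth: "x * \<theta> ^ i \<in> Mod" for i unfolding xp using Mod_poly[OF pR] thpow by blast
    have "\<forall>i. \<exists>cf. (\<forall>j. cf j \<in> R') \<and> x * \<theta> ^ i = (\<Sum>j<n. cf j * \<theta> ^ j)"
      using xth unfolding Mod_def by blast
    then obtain C where C: "\<And>i. (\<forall>j. C i j \<in> R') \<and> x * \<theta> ^ i = (\<Sum>j<n. C i j * \<theta> ^ j)"
      by metis
    define A where "A = mat n n (\<lambda>(i,j). C i j)"
    define v where "v = vec n (\<lambda>j. \<theta> ^ j)"
    have A: "A \<in> carrier_mat n n" unfolding A_def by simp
    have evec: "eigenvector A v x"
      unfolding eigenvector_def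
    proof (intro conjI)
      show "v \<in> carrier_vec (dim_row A)" unfolding v_def A_def by simp
      show "v \<noteq> 0\<^sub>v (dim_row A)"
      proof
        assume "v = 0\<^sub>v (dim_row A)"
        then have "v $ 0 = 0" using n1 unfolding A_def by simp
        then show False using n1 unfolding v_def by simp
      qed
      show "A *\<^sub>v v = x \<cdot>\<^sub>v v"
      proof (rule eq_vecI)
        show "dim_vec (A *\<^sub>v v) = dim_vec (x \<cdot>\<^sub>v v)" unfolding A_def v_def by simp
        fix i assume "i < dim_vec (x \<cdot>\<^sub>v v)"
        then have i: "i < n" unfolding v_def by simp
        have "(A *\<^sub>v v) $ i = (\<Sum>j = 0..<n. C i j * \<theta> ^ j)"
          using i unfolding A_def v_def by (simp add: scalar_prod_def)
        also have "\<dots> = x * \<theta> ^ i" using C[of i] by (simp add: atLeast0LessThan)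
        also have "\<dots> = (x \<cdot>\<^sub>v v) $ i" using i unfolding v_def by simp
        finally show "(A *\<^sub>v v) $ i = (x \<cdot>\<^sub>v v) $ i" .
      qed
    qed
    have root: "poly (char_poly A) x = 0"
      using eigenvalue_root_char_poly[OF A] evec unfolding eigenvalue_def by auto
    have lc: "lead_coeff (char_poly A) = 1" using degree_monic_char_poly[OF A] by simp
    define SR where "SR = {q :: 'b poly. \<forall>i. coeff q i \<in> R'}"
    have SRadd: "q1 + q2 \<in> SR" if "q1 \<in> SR" "q2 \<in> SR" for q1 q2
      using that R'add unfolding SR_def by simp
    have SRmult: "q1 * q2 \<in> SR" if qs: "q1 \<in> SR" "q2 \<in> SR" for q1 q2
    proof -
      have "coeff (q1 * q2) i \<in> R'" for i
        unfolding coeff_mult using qs unfolding SR_def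
        by (intro sum_closed[where T = R'] R'add R'0 R'mult) auto
      then show ?thesis unfolding SR_def by simp
    qed
    have SRneg: "- q \<in> SR" if "q \<in> SR" for q using that R'neg unfolding SR_def by simp
    have SRconst: "[:c:] \<in> SR" if "c \<in> R'" for c using that R'0 unfolding SR_def by (simp add: coeff_const)
    have SR0: "0 \<in> SR" using R'0 unfolding SR_def by simp
    have SR1: "1 \<in> SR" using R'0 R'1 unfolding SR_def by (simp add: coeff_1)
    have SRX: "[:0, 1:] \<in> SR" using R'0 R'1 unfolding SR_def by (simp add: coeff_pCons split: nat.split)
    have CM: "char_poly_matrix A \<in> carrier_mat n n" using A by simp
    have CMe: "char_poly_matrix A $$ (i, j) \<in> SR" if "i < n" "j < n" for i j
    proof -
      have "char_poly_matrix A $$ (i, j) = (if i = j then [:0,1:] else 0) + [:- C i j:]"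
        using that unfolding char_poly_matrix_def A_def by simp
      then show ?thesis using SRadd SRX SR0 SRconst R'neg C by auto
    qed
    have sgn: "(of_int (sign pp) :: 'b poly) \<in> SR" for pp
      by (cases rule: sign_cases[of pp]) (simp_all add: SR1 SRneg)
    have "char_poly A \<in> SR"
      unfolding char_poly_def det_def using CM
    proof (simp, intro sum_closed[where T = SR] SRadd SR0)
      fix pp assume "pp \<in> {pp. pp permutes {0..<n}}"
      then have pp: "pp permutes {0..<n}" by simp
      show "of_int (sign pp) * (\<Prod>i = 0..<n. char_poly_matrix A $$ (i, pp i)) \<in> SR"
      proof (rule SRmult[OF sgn], rule prod_closed[where T = SR], rule SRmult, assumption+, rule SR1)
        fix i assume "i \<in> {0..<n}"
        then show "char_poly_matrix A $$ (i, pp i) \<in> SR"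
          using CMe pp by (simp add: permutes_in_image)
      qed
    qed
    then have cpR: "\<forall>i. coeff (char_poly A) i \<in> R'" unfolding SR_def by simp
    show "x \<in> integral_closure R' L"
      unfolding integral_closure_def using xL lc cpR root by blast
  qed
  show ?thesis
    using irr_f sub1 sub2 unfolding R'_def L_def \<theta>_def by blast
qed


end
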